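(* Let $G$ be a countable discrete group, $A\subset\mathcal B(L^p(X,\mu))$ a weak* closed subalgebra, $\alpha$ a weak* continuous isometric action of $G$ on $A$, and for $t\in G$ let $E_t:W^*_p(G,A,\alpha)\to A$ be the weak* continuous contractive linear map with $E_t(\sum_s\pi(a_s)\lambda_p^E(s))=a_t$ on finite sums. If $f\in W^*_p(G,A,\alpha)$ satisfies $E_t(f)=0$ for all $t\in G$, then $f=0$.
   Context: $p\in(1,\infty)$, $E=L^p(X,\mu)$ $\sigma$-finite separable; $\mathcal B(E)$ carries the weak* topology as dual of the nuclear operators $E'\widehat\otimes E$. A weak* continuous isometric action is a homomorphism from $G$ into isometric weak* continuous automorphisms of $A$. On $\ell^p(G,E)$, $(\pi(a)\xi)(s)=\alpha_{s^{-1}}(a)\xi(s)$, $(\lambda_p^E(s)\xi)(t)=\xi(s^{-1}t)$; $W^*_p(G,A,\alpha)$ is the weak* closure of the finite sums $\sum_s\pi(a_s)\lambda_p^E(s)$ in $\mathcal B(\ell^p(G)\otimes_pE)$. *)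

theory Defs
  imports "HOL-Analysis.Analysis"
begin

text \<open>Concrete model of L^p spaces: p-integrable measurable complex functions,
  identified up to a.e. equality where relevant. Operators on L^p are
  maps on functions; equality of operators is equality a.e. on every input.\<close>

type_synonym 'a op = "('a \<Rightarrow> complex) \<Rightarrow> ('a \<Rightarrow> complex)"

definition Lp :: "'a measure \<Rightarrow> real \<Rightarrow> ('a \<Rightarrow> complex) set" where
  "Lp N p = {f. f \<in> borel_measurable N \<and> integrable N (\<lambda>x. norm (f x) powr p)}"

definition lpnorm :: "'a measure \<Rightarrow> real \<Rightarrow> ('a \<Rightarrow> complex) \<Rightarrow> real" where
  "lpnorm N p f = (\<integral>x. norm (f x) powr p \<partial>N) powr (1 / p)"

definition conj_exp :: "real \<Rightarrow> real" where
  "conj_exp p = p / (p - 1)"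

definition bounded_ops :: "'a measure \<Rightarrow> real \<Rightarrow> 'a op set" where
  "bounded_ops N p = {T.
     (\<forall>f\<in>Lp N p. T f \<in> Lp N p) \<and>
     (\<forall>f\<in>Lp N p. \<forall>g\<in>Lp N p. (AE x in N. f x = g x) \<longrightarrow> (AE x in N. T f x = T g x)) \<and>
     (\<forall>f\<in>Lp N p. \<forall>g\<in>Lp N p. \<forall>c::complex.
        AE x in N. T (\<lambda>y. f y + c * g y) x = T f x + c * T g x) \<and>
     (\<exists>C. \<forall>f\<in>Lp N p. lpnorm N p (T f) \<le> C * lpnorm N p f)}"

definition op_eq :: "'a measure \<Rightarrow> real \<Rightarrow> 'a op \<Rightarrow> 'a op \<Rightarrow> bool" where
  "op_eq N p T S \<longleftrightarrow> (\<forall>f\<in>Lp N p. AE x in N. T f x = S f x)"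

definition op_norm :: "'a measure \<Rightarrow> real \<Rightarrow> 'a op \<Rightarrow> real" where
  "op_norm N p T = Sup {lpnorm N p (T f) | f. f \<in> Lp N p \<and> lpnorm N p f \<le> 1}"

definition op_zero :: "'a op" where
  "op_zero = (\<lambda>f x. 0)"

definition op_add :: "'a op \<Rightarrow> 'a op \<Rightarrow> 'a op" where
  "op_add T S = (\<lambda>f x. T f x + S f x)"

definition op_smult :: "complex \<Rightarrow> 'a op \<Rightarrow> 'a op" where
  "op_smult c T = (\<lambda>f x. c * T f x)"

definition op_comp :: "'a op \<Rightarrow> 'a op \<Rightarrow> 'a op" where
  "op_comp T S = (\<lambda>f. T (S f))"

text \<open>Weak* continuous functionals on B(L^p(N)): those coming from nuclear operators
  in L^q \<hat>\<otimes> L^p, i.e. T \<mapsto> \<Sum>n \<langle>T x_n, y_n\<rangle> with \<Sum> \<parallel>x_n\<parallel>_p \<parallel>y_n\<parallel>_q < \<infinity>.\<close>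
definition nuclear_functionals :: "'a measure \<Rightarrow> real \<Rightarrow> ('a op \<Rightarrow> complex) set" where
  "nuclear_functionals N p =
     {(\<lambda>T. \<Sum>n. (\<integral>z. T (x n) z * y n z \<partial>N)) | x y.
        (\<forall>n. x n \<in> Lp N p \<and> y n \<in> Lp N (conj_exp p)) \<and>
        summable (\<lambda>n. lpnorm N p (x n) * lpnorm N (conj_exp p) (y n))}"

definition weak_star :: "'a measure \<Rightarrow> real \<Rightarrow> 'a op topology" where
  "weak_star N p = subtopology
     (topology_generated_by {{T. \<phi> T \<in> U} | \<phi> U. \<phi> \<in> nuclear_functionals N p \<and> open U})
     (bounded_ops N p)"

definition weak_star_cont_isometric_action ::
  "'x measure \<Rightarrow> real \<Rightarrow> 'x op set \<Rightarrow> ('g::group_add \<Rightarrow> 'x op \<Rightarrow> 'x op) \<Rightarrow> bool" where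
  "weak_star_cont_isometric_action M p A \<alpha> \<longleftrightarrow>
     (\<forall>g. \<forall>a\<in>A. \<alpha> g a \<in> A) \<and>
     (\<forall>g. \<forall>a\<in>A. \<forall>b\<in>A. \<forall>c. op_eq M p (\<alpha> g (op_add a (op_smult c b)))
                                   (op_add (\<alpha> g a) (op_smult c (\<alpha> g b)))) \<and>
     (\<forall>g. \<forall>a\<in>A. \<forall>b\<in>A. op_eq M p (\<alpha> g (op_comp a b)) (op_comp (\<alpha> g a) (\<alpha> g b))) \<and>
     (\<forall>g. \<forall>a\<in>A. op_norm M p (\<alpha> g a) = op_norm M p a) \<and>
     (\<forall>g. \<forall>b\<in>A. \<exists>a\<in>A. op_eq M p (\<alpha> g a) b) \<and>
     (\<forall>g. continuous_map (subtopology (weak_star M p) A) (subtopology (weak_star M p) A) (\<alpha> g)) \<and>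
     (\<forall>a\<in>A. op_eq M p (\<alpha> 0 a) a) \<and>
     (\<forall>g h. \<forall>a\<in>A. op_eq M p (\<alpha> (g + h) a) (\<alpha> g (\<alpha> h a)))"

text \<open>l^p(G,E) = l^p(G) \<otimes>_p L^p(X) realised as L^p(G \<times> X) with counting measure on G.
  The group G is written additively (group_add is not assumed commutative).\<close>
abbreviation big_measure :: "'x measure \<Rightarrow> ('g \<times> 'x) measure" where
  "big_measure M \<equiv> count_space UNIV \<Otimes>\<^sub>M M"

definition pi_rep :: "('g::group_add \<Rightarrow> 'x op \<Rightarrow> 'x op) \<Rightarrow> 'x op \<Rightarrow> ('g \<times> 'x) op" where
  "pi_rep \<alpha> a = (\<lambda>\<xi> (s, x). \<alpha> (- s) a (\<lambda>y. \<xi> (s, y)) x)"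

definition lambda_rep :: "'g::group_add \<Rightarrow> ('g \<times> 'x) op" where
  "lambda_rep s = (\<lambda>\<xi> (t, x). \<xi> (- s + t, x))"

definition finite_sum_op :: "('g::group_add \<Rightarrow> 'x op \<Rightarrow> 'x op) \<Rightarrow> 'g set \<Rightarrow> ('g \<Rightarrow> 'x op) \<Rightarrow> ('g \<times> 'x) op" where
  "finite_sum_op \<alpha> F a = (\<lambda>\<xi> z. \<Sum>s\<in>F. pi_rep \<alpha> (a s) (lambda_rep s \<xi>) z)"

definition finite_sums :: "('g::group_add \<Rightarrow> 'x op \<Rightarrow> 'x op) \<Rightarrow> 'x op set \<Rightarrow> ('g \<times> 'x) op set" where
  "finite_sums \<alpha> A = {finite_sum_op \<alpha> F a | F a. finite F \<and> (\<forall>s\<in>F. a s \<in> A)}"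

definition W_star_p :: "'x measure \<Rightarrow> real \<Rightarrow> 'x op set \<Rightarrow> ('g::group_add \<Rightarrow> 'x op \<Rightarrow> 'x op) \<Rightarrow> ('g \<times> 'x) op set" where
  "W_star_p M p A \<alpha> = (weak_star (big_measure M) p) closure_of (finite_sums \<alpha> A)"

definition is_subalgebra :: "'x measure \<Rightarrow> real \<Rightarrow> 'x op set \<Rightarrow> bool" where
  "is_subalgebra M p A \<longleftrightarrow> A \<subseteq> bounded_ops M p \<and> op_zero \<in> A \<and>
     (\<forall>a\<in>A. \<forall>b\<in>A. op_add a b \<in> A \<and> op_comp a b \<in> A) \<and>
     (\<forall>c. \<forall>a\<in>A. op_smult c a \<in> A)"

definition separable_Lp :: "'x measure \<Rightarrow> real \<Rightarrow> bool" where
  "separable_Lp M p \<longleftrightarrow> (\<exists>D. countable D \<and> D \<subseteq> Lp M p \<and>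
     (\<forall>f\<in>Lp M p. \<forall>e>0. \<exists>g\<in>D. lpnorm M p (\<lambda>x. f x - g x) < e))"

end

theory Submission
  imports Defs
begin

lemma nuclear_cont:
  assumes "\<phi> \<in> nuclear_functionals N p"
  shows "continuous_map (weak_star N p) euclidean \<phi>"
proof -
  let ?S = "{{T. \<phi> T \<in> U} | \<phi> U. \<phi> \<in> nuclear_functionals N p \<and> open U}"
  have main: "openin (subtopology (topology_generated_by ?S) (bounded_ops N p))
          {x \<in> topspace (subtopology (topology_generated_by ?S) (bounded_ops N p)). \<phi> x \<in> U}"
    if "open U" for U
  proof -
    have o: "openin (topology_generated_by ?S) {T. \<phi> T \<in> U}"
      by (rule topology_generated_by_Basis, rule CollectI, rule exI[of _ \<phi>], rule exI[of _ U])
        (use assms that in simp)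
    then have sub: "{T. \<phi> T \<in> U} \<subseteq> topspace (topology_generated_by ?S)"
      by (rule openin_subset)
    have eq: "{x \<in> topspace (subtopology (topology_generated_by ?S) (bounded_ops N p)). \<phi> x \<in> U}
        = {T. \<phi> T \<in> U} \<inter> bounded_ops N p"
    proof -
      have gen: "\<And>X B. {T. \<phi> T \<in> U} \<subseteq> X \<Longrightarrow> {x \<in> X \<inter> B. \<phi> x \<in> U} = {T. \<phi> T \<in> U} \<inter> B"
        by blast
      show ?thesis unfolding topspace_subtopology by (rule gen[OF sub])
    qed
    show ?thesis unfolding eq by (rule openin_subtopology_Int[OF o])
  qed
  show ?thesis
    unfolding continuous_map_def
  proof (intro conjI allI impI)
    show "\<phi> \<in> topspace (weak_star N p) \<rightarrow> topspace euclidean" by simp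
    fix U :: "complex set" assume "openin euclidean U"
    then have "open U" by simp
    show "openin (weak_star N p) {x \<in> topspace (weak_star N p). \<phi> x \<in> U}"
      unfolding weak_star_def by (rule main[OF \<open>open U\<close>])
  qed
qed

lemma closure_agree:
  fixes g1 g2 :: "'a \<Rightarrow> complex"
  assumes c1: "continuous_map (subtopology T W) euclidean g1"
    and c2: "continuous_map (subtopology T W) euclidean g2"
    and W: "W = T closure_of S"
    and agree: "\<And>g. g \<in> S \<Longrightarrow> g \<in> topspace T \<Longrightarrow> g1 g = g2 g"
    and f: "f \<in> W"
  shows "g1 f = g2 f"
proof -
  have c: "continuous_map (subtopology T W) euclidean (\<lambda>x. g1 x - g2 x)"
    using c1 c2 by (intro continuous_map_diff)
  have "closedin (subtopology T W) {x \<in> topspace (subtopology T W). g1 x - g2 x \<in> {0}}"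
    by (rule closedin_continuous_map_preimage[OF c]) (use closed_singleton closed_closedin in blast)
  then obtain C where C: "closedin T C" and Z: "{x \<in> topspace (subtopology T W). g1 x - g2 x \<in> {0}} = C \<inter> W"
    unfolding closedin_subtopology by blast
  have sub: "topspace T \<inter> S \<subseteq> C"
  proof
    fix g assume g: "g \<in> topspace T \<inter> S"
    have "g \<in> W" unfolding W by (rule subsetD[OF closure_of_subset_Int g])
    moreover have "g1 g = g2 g" using g agree by blast
    ultimately have "g \<in> {x \<in> topspace (subtopology T W). g1 x - g2 x \<in> {0}}"
      using g by simp
    then show "g \<in> C" using Z by blast
  qed
  have "T closure_of (topspace T \<inter> S) \<subseteq> C" by (rule closure_of_minimal[OF sub C])
  moreover have "f \<in> T closure_of (topspace T \<inter> S)" using f unfolding W closure_of_restrict[of T S] .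
  ultimately have "f \<in> C" by blast
  then have "f \<in> {x \<in> topspace (subtopology T W). g1 x - g2 x \<in> {0}}" using Z f by blast
  then show ?thesis by simp
qed



lemma lpnorm_nonneg: "0 \<le> lpnorm N p f"
  unfolding lpnorm_def by simp

lemma Lp_meas: "f \<in> Lp N p \<Longrightarrow> f \<in> borel_measurable N"
  unfolding Lp_def by simp

lemma lpnorm_cong_AE:
  assumes "f \<in> borel_measurable N" "g \<in> borel_measurable N" "AE x in N. f x = g x"
  shows "lpnorm N p f = lpnorm N p g"
proof -
  have "(\<integral>x. norm (f x) powr p \<partial>N) = (\<integral>x. norm (g x) powr p \<partial>N)"
    using assms by (intro integral_cong_AE) auto
  then show ?thesis unfolding lpnorm_def by simp
qed

lemma lpnorm_zero_AE:
  assumes f: "f \<in> Lp N p" and p: "0 < p" and z: "lpnorm N p f \<le> 0"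
  shows "AE x in N. f x = 0"
proof -
  have "lpnorm N p f = 0" using z lpnorm_nonneg[of N p f] by linarith
  then have "(\<integral>x. norm (f x) powr p \<partial>N) = 0"
    unfolding lpnorm_def by simp
  moreover have "integrable N (\<lambda>x. norm (f x) powr p)" using f unfolding Lp_def by simp
  ultimately have "AE x in N. norm (f x) powr p = 0"
    by (subst integral_nonneg_eq_0_iff_AE[symmetric]) auto
  then show ?thesis by eventually_elim simp
qed

lemma Lp_zero: "(\<lambda>_. 0) \<in> Lp N p"
  unfolding Lp_def by simp

lemma lpnorm_zero: "lpnorm N p (\<lambda>_. 0) = 0"
  unfolding lpnorm_def by simp

lemma Lp_scale:
  assumes f: "f \<in> Lp N p" and p: "0 < p"
  shows "(\<lambda>x. c * f x) \<in> Lp N p"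
    and "lpnorm N p (\<lambda>x. c * f x) = norm c * lpnorm N p f"
proof -
  have eq: "\<And>x. norm (c * f x) powr p = norm c powr p * norm (f x) powr p"
    by (simp add: norm_mult powr_mult)
  show "(\<lambda>x. c * f x) \<in> Lp N p"
    using f unfolding Lp_def by (auto simp: norm_mult powr_mult)
  have "(\<integral>x. norm (c * f x) powr p \<partial>N) = norm c powr p * (\<integral>x. norm (f x) powr p \<partial>N)"
    unfolding eq by simp
  moreover have "0 \<le> (\<integral>x. norm (f x) powr p \<partial>N)" by simp
  ultimately show "lpnorm N p (\<lambda>x. c * f x) = norm c * lpnorm N p f"
    unfolding lpnorm_def using p by (simp add: powr_mult powr_powr)
qed

lemma bops_Lp: "T \<in> bounded_ops N p \<Longrightarrow> f \<in> Lp N p \<Longrightarrow> T f \<in> Lp N p"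
  unfolding bounded_ops_def by blast

lemma bops_cong: "T \<in> bounded_ops N p \<Longrightarrow> f \<in> Lp N p \<Longrightarrow> g \<in> Lp N p \<Longrightarrow>
   (AE x in N. f x = g x) \<Longrightarrow> (AE x in N. T f x = T g x)"
  unfolding bounded_ops_def by blast

lemma bops_lin: "T \<in> bounded_ops N p \<Longrightarrow> f \<in> Lp N p \<Longrightarrow> g \<in> Lp N p \<Longrightarrow>
   AE x in N. T (\<lambda>y. f y + c * g y) x = T f x + c * T g x"
  unfolding bounded_ops_def by blast

lemma bops_bound: "T \<in> bounded_ops N p \<Longrightarrow> \<exists>C. \<forall>f\<in>Lp N p. lpnorm N p (T f) \<le> C * lpnorm N p f"
  unfolding bounded_ops_def by blast

lemma bops_zero:
  assumes T: "T \<in> bounded_ops N p"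
  shows "AE x in N. T (\<lambda>_. 0) x = 0"
proof -
  have "AE x in N. T (\<lambda>y. (\<lambda>_. 0) y + 1 * (\<lambda>_. 0) y) x = T (\<lambda>_. 0) x + 1 * T (\<lambda>_. 0) x"
    by (rule bops_lin[OF T Lp_zero Lp_zero])
  then show ?thesis by eventually_elim simp
qed

lemma bops_scale:
  assumes T: "T \<in> bounded_ops N p" and f: "f \<in> Lp N p" and p: "0 < p"
  shows "AE x in N. T (\<lambda>y. c * f y) x = c * T f x"
proof -
  have "AE x in N. T (\<lambda>y. (\<lambda>_. 0) y + c * f y) x = T (\<lambda>_. 0) x + c * T f x"
    by (rule bops_lin[OF T Lp_zero f])
  with bops_zero[OF T] show ?thesis by eventually_elim simp
qed

lemma op_norm_le0_imp_zero:
  assumes T: "T \<in> bounded_ops N p" and p: "0 < p" and n: "op_norm N p T \<le> 0"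
  shows "op_eq N p T op_zero"
  unfolding op_eq_def op_zero_def
proof
  fix f assume f: "f \<in> Lp N p"
  obtain C where C: "\<forall>f\<in>Lp N p. lpnorm N p (T f) \<le> C * lpnorm N p f"
    using bops_bound[OF T] by blast
  let ?X = "{lpnorm N p (T f) | f. f \<in> Lp N p \<and> lpnorm N p f \<le> 1}"
  have bdd: "bdd_above ?X"
  proof (rule bdd_aboveI)
    fix y assume "y \<in> ?X"
    then obtain g where g: "g \<in> Lp N p" "lpnorm N p g \<le> 1" and y: "y = lpnorm N p (T g)" by blast
    have "y \<le> C * lpnorm N p g" using C g y by blast
    also have "\<dots> \<le> \<bar>C\<bar>"
    proof (cases "C \<ge> 0")
      case True then show ?thesis using g lpnorm_nonneg[of N p g] by (simp add: mult_left_le)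
    next
      case False then show ?thesis using lpnorm_nonneg[of N p g]
        by (smt (verit) mult_nonpos_nonneg)
    qed
    finally show "y \<le> \<bar>C\<bar>" .
  qed
  have le: "lpnorm N p (T g) \<le> 0" if g: "g \<in> Lp N p" "lpnorm N p g \<le> 1" for g
  proof -
    have "lpnorm N p (T g) \<in> ?X" using g by blast
    then have "lpnorm N p (T g) \<le> Sup ?X" by (rule cSup_upper[OF _ bdd])
    then show ?thesis using n unfolding op_norm_def by simp
  qed
  show "AE x in N. T f x = 0"
  proof (cases "lpnorm N p f = 0")
    case True
    then have "AE x in N. f x = 0" using lpnorm_zero_AE[OF f p] by simp
    then have "AE x in N. T f x = T (\<lambda>_. 0) x" by (rule bops_cong[OF T f Lp_zero])
    with bops_zero[OF T] show ?thesis by eventually_elim simp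
  next
    case False
    define L where "L = lpnorm N p f"
    have L: "0 < L" using False lpnorm_nonneg[of N p f] unfolding L_def by simp
    let ?g = "\<lambda>y. complex_of_real (1 / L) * f y"
    have g: "?g \<in> Lp N p" by (rule Lp_scale(1)[OF f p])
    have "lpnorm N p ?g = 1" using Lp_scale(2)[OF f p, of "complex_of_real (1/L)"] L
      unfolding L_def[symmetric] by (simp add: norm_divide)
    then have "lpnorm N p (T ?g) \<le> 0" using le[OF g] by simp
    then have "AE x in N. T ?g x = 0" by (rule lpnorm_zero_AE[OF bops_Lp[OF T g] p])
    moreover have "AE x in N. T ?g x = complex_of_real (1 / L) * T f x"
      by (rule bops_scale[OF T f p])
    ultimately show ?thesis by eventually_elim (use L in simp)
  qed
qed

lemma op_eq_zero_norm:
  assumes T: "T \<in> bounded_ops N p" and e: "op_eq N p T op_zero"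
  shows "op_norm N p T = 0"
proof -
  have "{lpnorm N p (T f) | f. f \<in> Lp N p \<and> lpnorm N p f \<le> 1} = {0}"
  proof (intro equalityI subsetI)
    fix y assume "y \<in> {lpnorm N p (T f) | f. f \<in> Lp N p \<and> lpnorm N p f \<le> 1}"
    then obtain g where g: "g \<in> Lp N p" and y: "y = lpnorm N p (T g)" by blast
    have "AE x in N. T g x = 0" using e g unfolding op_eq_def op_zero_def by blast
    then have "lpnorm N p (T g) = lpnorm N p (\<lambda>_. 0)"
      by (intro lpnorm_cong_AE Lp_meas[OF bops_Lp[OF T g]]) auto
    then show "y \<in> {0}" using y lpnorm_zero by simp
  next
    fix y assume "y \<in> {0::real}"
    then have y: "y = 0" by simp
    have "AE x in N. T (\<lambda>_. 0) x = 0" using e Lp_zero unfolding op_eq_def op_zero_def by blast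
    then have "lpnorm N p (T (\<lambda>_. 0)) = lpnorm N p (\<lambda>_. 0)"
      by (intro lpnorm_cong_AE Lp_meas[OF bops_Lp[OF T Lp_zero]]) auto
    then show "y \<in> {lpnorm N p (T f) | f. f \<in> Lp N p \<and> lpnorm N p f \<le> 1}"
      using y lpnorm_zero Lp_zero by (metis (mono_tags, lifting) mem_Collect_eq order_refl zero_le_one)
  qed
  then show ?thesis unfolding op_norm_def by simp
qed



lemma alpha_resp:
  assumes p: "0 < p" and subalg: "is_subalgebra M p A"
    and act: "weak_star_cont_isometric_action M p A \<alpha>"
    and b: "b \<in> A" and b': "b' \<in> A" and e: "op_eq M p b b'"
  shows "op_eq M p (\<alpha> g b) (\<alpha> g b')"
proof -
  have Asub: "A \<subseteq> bounded_ops M p" using subalg unfolding is_subalgebra_def by blast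
  have mapsA: "\<And>g a. a \<in> A \<Longrightarrow> \<alpha> g a \<in> A" using act unfolding weak_star_cont_isometric_action_def by blast
  have lin: "\<And>g a b c. a \<in> A \<Longrightarrow> b \<in> A \<Longrightarrow> op_eq M p (\<alpha> g (op_add a (op_smult c b)))
                                   (op_add (\<alpha> g a) (op_smult c (\<alpha> g b)))"
    using act unfolding weak_star_cont_isometric_action_def by blast
  have nrm: "\<And>g a. a \<in> A \<Longrightarrow> op_norm M p (\<alpha> g a) = op_norm M p a"
    using act unfolding weak_star_cont_isometric_action_def by blast
  define d where "d = op_add b' (op_smult (-1) b)"
  have dA: "d \<in> A" unfolding d_def using subalg b b' unfolding is_subalgebra_def by blast
  have de: "op_eq M p d op_zero"
    unfolding op_eq_def op_zero_def
  proof
    fix f assume "f \<in> Lp M p"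
    then have "AE x in M. b f x = b' f x" using e unfolding op_eq_def by blast
    then show "AE x in M. d f x = 0" unfolding d_def op_add_def op_smult_def by eventually_elim simp
  qed
  have "op_norm M p d = 0" by (rule op_eq_zero_norm[OF subsetD[OF Asub dA] de])
  then have "op_norm M p (\<alpha> g d) \<le> 0" using nrm[OF dA] by simp
  then have ade: "op_eq M p (\<alpha> g d) op_zero"
    by (rule op_norm_le0_imp_zero[OF subsetD[OF Asub mapsA[OF dA]] p])
  have bb: "op_add b (op_smult 1 d) = b'"
    unfolding d_def op_add_def op_smult_def by (intro ext) simp
  have l: "op_eq M p (\<alpha> g b') (op_add (\<alpha> g b) (op_smult 1 (\<alpha> g d)))"
    using lin[OF b dA, of g 1] unfolding bb .
  show ?thesis unfolding op_eq_def
  proof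
    fix f assume f: "f \<in> Lp M p"
    have "AE x in M. \<alpha> g b' f x = \<alpha> g b f x + \<alpha> g d f x"
      using l f unfolding op_eq_def op_add_def op_smult_def by auto
    moreover have "AE x in M. \<alpha> g d f x = 0" using ade f unfolding op_eq_def op_zero_def by blast
    ultimately show "AE x in M. \<alpha> g b f x = \<alpha> g b' f x" by eventually_elim simp
  qed
qed

lemma alpha_zero:
  assumes subalg: "is_subalgebra M p A"
    and act: "weak_star_cont_isometric_action M p A \<alpha>"
  shows "op_eq M p (\<alpha> g op_zero) op_zero"
proof -
  have z: "op_zero \<in> A" using subalg unfolding is_subalgebra_def by blast
  have lin: "op_eq M p (\<alpha> g (op_add op_zero (op_smult (-1) op_zero)))
                                   (op_add (\<alpha> g op_zero) (op_smult (-1) (\<alpha> g op_zero)))"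
    using act z unfolding weak_star_cont_isometric_action_def by blast
  have e: "op_add op_zero (op_smult (-1) op_zero) = (op_zero :: 'a op)"
    unfolding op_add_def op_smult_def op_zero_def by simp
  show ?thesis using lin unfolding e unfolding op_eq_def op_add_def op_smult_def op_zero_def
    by simp
qed


definition dl :: "'g \<Rightarrow> ('x \<Rightarrow> complex) \<Rightarrow> ('g \<times> 'x \<Rightarrow> complex)" where
  "dl t y w = (if fst w = t then y (snd w) else 0)"

definition tr :: "'g set \<Rightarrow> ('g \<times> 'x \<Rightarrow> complex) \<Rightarrow> ('g \<times> 'x \<Rightarrow> complex)" where
  "tr F \<Xi> w = (if fst w \<in> F then \<Xi> w else 0)"

lemma ps_count:
  assumes sf: "sigma_finite_measure M"
  shows "pair_sigma_finite (count_space (UNIV::'g::countable set)) M"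
  by (intro pair_sigma_finite.intro sigma_finite_measure_count_space_countable sf) simp

lemma sec_meas:
  fixes k :: "'x \<Rightarrow> 'b::{banach, second_countable_topology}"
  assumes [measurable]: "k \<in> borel_measurable M"
  shows "(\<lambda>w. if fst w = t then k (snd w) else 0) \<in> borel_measurable (count_space UNIV \<Otimes>\<^sub>M M)"
  by measurable

lemma sec_meas_real:
  fixes k :: "'x \<Rightarrow> real"
  assumes [measurable]: "k \<in> borel_measurable M"
  shows "(\<lambda>w. if fst w = t then k (snd w) else 0) \<in> borel_measurable (count_space UNIV \<Otimes>\<^sub>M M)"
  by measurable

lemma section_meas:
  assumes "F \<in> borel_measurable (count_space UNIV \<Otimes>\<^sub>M M)"
  shows "(\<lambda>z. F (t, z)) \<in> borel_measurable M"
  by (rule measurable_Pair2[OF assms]) simp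

lemma sec_nn:
  assumes sf: "sigma_finite_measure M"
    and H: "H \<in> borel_measurable (count_space UNIV \<Otimes>\<^sub>M M)"
    and z: "\<And>s z. s \<noteq> t \<Longrightarrow> H (s, z) = 0"
  shows "(\<integral>\<^sup>+ w. H w \<partial>(count_space UNIV \<Otimes>\<^sub>M M)) = (\<integral>\<^sup>+ z. H (t, z) \<partial>M)"
proof -
  have "(\<integral>\<^sup>+ w. H w \<partial>(count_space UNIV \<Otimes>\<^sub>M M)) = (\<integral>\<^sup>+ x. \<integral>\<^sup>+ y. H (x, y) \<partial>M \<partial>count_space UNIV)"
    by (rule sigma_finite_measure.nn_integral_fst[OF sf H, symmetric])
  also have "\<dots> = (\<integral>\<^sup>+ x. (\<integral>\<^sup>+ y. H (t, y) \<partial>M) * indicator {t} x \<partial>count_space UNIV)"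
    by (intro nn_integral_cong) (auto simp: z indicator_def)
  also have "\<dots> = (\<integral>\<^sup>+ y. H (t, y) \<partial>M)"
    by (subst nn_integral_cmult_indicator) auto
  finally show ?thesis .
qed

lemma sec_int:
  fixes k :: "'x \<Rightarrow> 'b::{banach, second_countable_topology}"
  assumes sf: "sigma_finite_measure M" and k: "k \<in> borel_measurable M"
  shows "integrable (count_space UNIV \<Otimes>\<^sub>M M) (\<lambda>w. if fst w = t then k (snd w) else 0) \<longleftrightarrow> integrable M k"
proof -
  have m: "(\<lambda>w. if fst w = t then k (snd w) else 0) \<in> borel_measurable (count_space UNIV \<Otimes>\<^sub>M M)"
    by (rule sec_meas[OF k])
  have mn: "(\<lambda>w. ennreal (norm (if fst w = t then k (snd w) else 0))) \<in> borel_measurable (count_space UNIV \<Otimes>\<^sub>M M)"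
    using m by measurable
  have "(\<integral>\<^sup>+ w. ennreal (norm (if fst w = t then k (snd w) else 0)) \<partial>(count_space UNIV \<Otimes>\<^sub>M M))
      = (\<integral>\<^sup>+ z. ennreal (norm (if fst (t, z) = t then k (snd (t, z)) else 0)) \<partial>M)"
    by (rule sec_nn[OF sf mn]) simp
  then show ?thesis unfolding integrable_iff_bounded using m k by simp
qed

lemma sec_integral:
  fixes k :: "'x \<Rightarrow> 'b::{banach, second_countable_topology}"
  assumes sf: "sigma_finite_measure M" and k: "k \<in> borel_measurable M"
  shows "integral\<^sup>L (count_space (UNIV::'g::countable set) \<Otimes>\<^sub>M M) (\<lambda>w. if fst w = t then k (snd w) else 0) = integral\<^sup>L M k"
proof (cases "integrable M k")
  case True
  have i: "integrable (count_space (UNIV::'g set) \<Otimes>\<^sub>M M) (\<lambda>w. if fst w = t then k (snd w) else 0)"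
    by (rule iffD2[OF sec_int[OF sf k, of t] True])
  have "integral\<^sup>L (count_space (UNIV::'g set) \<Otimes>\<^sub>M M) (\<lambda>w. if fst w = t then k (snd w) else 0)
     = (\<integral>x. (\<integral>y. (if fst (x, y) = t then k (snd (x, y)) else 0) \<partial>M) \<partial>count_space UNIV)"
    by (rule pair_sigma_finite.integral_fst'[OF ps_count[OF sf] i, symmetric])
  also have "\<dots> = (\<integral>x. (if x = t then integral\<^sup>L M k else 0) \<partial>count_space UNIV)"
    by (intro Bochner_Integration.integral_cong) auto
  also have "\<dots> = integral\<^sup>L M k"
  proof (cases "integral\<^sup>L M k = 0")
    case True
    then have "(\<lambda>x. if x = t then integral\<^sup>L M k else 0) = (\<lambda>x. 0)" by auto
    then show ?thesis using True by simp
  next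
    case False
    have "(\<integral>x. (if x = t then integral\<^sup>L M k else 0) \<partial>count_space UNIV)
       = (\<Sum>a | a \<in> UNIV \<and> (if a = t then integral\<^sup>L M k else 0) \<noteq> 0. (if a = t then integral\<^sup>L M k else 0))"
      by (rule lebesgue_integral_count_space_finite_support) (rule finite_subset[of _ "{t}"], auto)
    also have "{a. a \<in> UNIV \<and> (if a = t then integral\<^sup>L M k else 0) \<noteq> 0} = {t}" using False by auto
    finally show ?thesis by simp
  qed
  finally show ?thesis .
next
  case False
  then have "\<not> integrable (count_space (UNIV::'g set) \<Otimes>\<^sub>M M) (\<lambda>w. if fst w = t then k (snd w) else 0)"
    using iffD1[OF sec_int[OF sf k, of t]] False by metis
  then show ?thesis using False by (simp add: not_integrable_integral_eq)
qed

lemma AE_big: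
  assumes sf: "sigma_finite_measure M"
    and P: "{w \<in> space (count_space (UNIV::'g::countable set) \<Otimes>\<^sub>M M). P w} \<in> sets (count_space UNIV \<Otimes>\<^sub>M M)"
    and ae: "\<And>s. AE z in M. P (s, z)"
  shows "AE w in count_space (UNIV::'g set) \<Otimes>\<^sub>M M. P w"
  by (rule pair_sigma_finite.AE_pair_measure[OF ps_count[OF sf] P]) (simp add: ae)

lemma Lp_section:
  assumes sf: "sigma_finite_measure M" and X: "\<Xi> \<in> Lp (count_space (UNIV::'g::countable set) \<Otimes>\<^sub>M M) p"
  shows "(\<lambda>z. \<Xi> (t, z)) \<in> Lp M p"
proof -
  have Xm[measurable]: "\<Xi> \<in> borel_measurable (count_space UNIV \<Otimes>\<^sub>M M)" using X unfolding Lp_def by simp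
  have km: "(\<lambda>z. \<Xi> (t, z)) \<in> borel_measurable M" by (rule section_meas[OF Xm])
  have kpm: "(\<lambda>z. norm (\<Xi> (t, z)) powr p) \<in> borel_measurable M" using km by measurable
  have iX: "integrable (count_space UNIV \<Otimes>\<^sub>M M) (\<lambda>w. norm (\<Xi> w) powr p)" using X unfolding Lp_def by simp
  have "integrable (count_space UNIV \<Otimes>\<^sub>M M) (\<lambda>w. if fst w = t then norm (\<Xi> (t, snd w)) powr p else 0)"
  proof (rule Bochner_Integration.integrable_bound[OF iX])
    show "(\<lambda>w. if fst w = t then norm (\<Xi> (t, snd w)) powr p else 0) \<in> borel_measurable (count_space UNIV \<Otimes>\<^sub>M M)"
      by (rule sec_meas_real[OF kpm])
    show "AE w in count_space UNIV \<Otimes>\<^sub>M M. norm (if fst w = t then norm (\<Xi> (t, snd w)) powr p else 0) \<le> norm (norm (\<Xi> w) powr p)"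
    proof (intro AE_I2)
      fix w
      show "norm (if fst w = t then norm (\<Xi> (t, snd w)) powr p else 0) \<le> norm (norm (\<Xi> w) powr p)"
        by (cases w) simp
    qed
  qed
  then have "integrable M (\<lambda>z. norm (\<Xi> (t, z)) powr p)" by (rule iffD1[OF sec_int[OF sf kpm, of t]])
  then show ?thesis unfolding Lp_def using km by simp
qed

lemma Lp_dl:
  assumes sf: "sigma_finite_measure M" and y: "y \<in> Lp M p"
  shows "dl t y \<in> Lp (count_space (UNIV::'g::countable set) \<Otimes>\<^sub>M M) p"
proof -
  have ym: "y \<in> borel_measurable M" using y unfolding Lp_def by simp
  have ypm: "(\<lambda>z. norm (y z) powr p) \<in> borel_measurable M" using ym by measurable
  have e: "(\<lambda>w. norm (dl t y w) powr p) = (\<lambda>w. if fst w = t then norm (y (snd w)) powr p else 0)"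
    by (auto simp: dl_def)
  have "integrable (count_space (UNIV::'g set) \<Otimes>\<^sub>M M) (\<lambda>w. norm (dl t y w) powr p)"
    unfolding e using sec_int[OF sf ypm] y unfolding Lp_def by simp
  moreover have "dl t y \<in> borel_measurable (count_space (UNIV::'g set) \<Otimes>\<^sub>M M)"
    unfolding dl_def[abs_def] by (rule sec_meas[OF ym])
  ultimately show ?thesis unfolding Lp_def by simp
qed

lemma Lp_tr:
  assumes X: "\<Xi> \<in> Lp (count_space (UNIV::'g set) \<Otimes>\<^sub>M M) p"
  shows "tr F \<Xi> \<in> Lp (count_space (UNIV::'g set) \<Otimes>\<^sub>M M) p"
proof -
  have Xm[measurable]: "\<Xi> \<in> borel_measurable (count_space UNIV \<Otimes>\<^sub>M M)" using X unfolding Lp_def by simp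
  have [measurable]: "Measurable.pred (count_space UNIV \<Otimes>\<^sub>M M) (\<lambda>w. fst w \<in> F)"
    by (rule measurable_compose[OF measurable_fst]) simp
  have m: "tr F \<Xi> \<in> borel_measurable (count_space UNIV \<Otimes>\<^sub>M M)"
    unfolding tr_def[abs_def] by measurable
  have iX: "integrable (count_space UNIV \<Otimes>\<^sub>M M) (\<lambda>w. norm (\<Xi> w) powr p)" using X unfolding Lp_def by simp
  have "integrable (count_space UNIV \<Otimes>\<^sub>M M) (\<lambda>w. norm (tr F \<Xi> w) powr p)"
  proof (rule Bochner_Integration.integrable_bound[OF iX])
    show "(\<lambda>w. norm (tr F \<Xi> w) powr p) \<in> borel_measurable (count_space UNIV \<Otimes>\<^sub>M M)" using m by measurable
    show "AE w in count_space UNIV \<Otimes>\<^sub>M M. norm (norm (tr F \<Xi> w) powr p) \<le> norm (norm (\<Xi> w) powr p)"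
      by (intro AE_I2) (auto simp: tr_def)
  qed
  then show ?thesis unfolding Lp_def using m by simp
qed



lemma dual_zero:
  assumes sf: "sigma_finite_measure M" and p: "1 < p" and hm: "h \<in> borel_measurable M"
    and orth: "\<And>y. y \<in> Lp M (conj_exp p) \<Longrightarrow> (\<integral>z. h z * y z \<partial>M) = 0"
  shows "AE z in M. h z = 0"
proof -
  obtain w0 where w0m[measurable]: "w0 \<in> borel_measurable M" and w0i: "integral\<^sup>N M w0 \<noteq> \<infinity>"
    and w0p: "\<And>x. x \<in> space M \<Longrightarrow> 0 < w0 x \<and> w0 x < \<infinity>"
    using sigma_finite_measure.Ex_finite_integrable_function[OF sf] by blast
  define w where "w z = min 1 (enn2real (w0 z))" for z
  have wm[measurable]: "w \<in> borel_measurable M" unfolding w_def[abs_def] by measurable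
  have wpos: "0 < w z" if "z \<in> space M" for z
    using w0p[OF that] unfolding w_def by (simp add: enn2real_positive_iff top.not_eq_extremum)
  have w0': "0 \<le> w z" "w z \<le> 1" for z unfolding w_def by auto
  have wint: "integrable M w"
    unfolding integrable_iff_bounded
  proof (intro conjI wm)
    have "(\<integral>\<^sup>+ z. ennreal (norm (w z)) \<partial>M) \<le> (\<integral>\<^sup>+ z. w0 z \<partial>M)"
    proof (intro nn_integral_mono)
      fix z assume z: "z \<in> space M"
      have "ennreal (norm (w z)) = ennreal (w z)" using w0' by simp
      also have "\<dots> \<le> ennreal (enn2real (w0 z))" unfolding w_def by (intro ennreal_leI) simp
      also have "\<dots> = w0 z" using w0p[OF z] by (simp add: less_top)
      finally show "ennreal (norm (w z)) \<le> w0 z" .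
    qed
    also have "\<dots> < \<infinity>" using w0i by (simp add: less_top)
    finally show "(\<integral>\<^sup>+ z. ennreal (norm (w z)) \<partial>M) < \<infinity>" .
  qed
  define q where "q = conj_exp p"
  have q: "1 \<le> q" unfolding q_def conj_exp_def using p by (simp add: field_simps)
  define y where "y z = cnj (h z) / (1 + complex_of_real (cmod (h z)))^2 * complex_of_real (w z)" for z
  have cm[measurable]: "cnj \<in> borel_measurable borel"
    by (intro borel_measurable_continuous_onI continuous_on_cnj continuous_on_id)
  have hm'[measurable]: "h \<in> borel_measurable M" by (rule hm)
  have ym[measurable]: "y \<in> borel_measurable M" unfolding y_def[abs_def] by measurable
  have hle: "cmod (h z) / (1 + cmod (h z))^2 \<le> 1" for z
  proof -
    have "cmod (h z) \<le> (1 + cmod (h z))^2" by (simp add: power2_eq_square algebra_simps)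
    then show ?thesis by (simp add: divide_le_eq)
  qed
  have ny: "cmod (y z) = cmod (h z) / (1 + cmod (h z))^2 * w z" for z
  proof -
    have "cmod ((1 + complex_of_real (cmod (h z)))^2) = (1 + cmod (h z))^2"
      by (metis norm_of_real of_real_1 of_real_add of_real_power abs_of_nonneg norm_ge_zero
          add_nonneg_nonneg zero_le_one zero_le_power2)
    then show ?thesis unfolding y_def using w0'[of z] by (simp add: norm_mult norm_divide)
  qed
  have nyw: "cmod (y z) \<le> w z" for z
    unfolding ny using mult_right_mono[OF hle[of z] w0'(1)[of z]] by linarith
  have yLp: "y \<in> Lp M q"
    unfolding Lp_def
  proof (intro CollectI conjI ym)
    show "integrable M (\<lambda>x. cmod (y x) powr q)"
    proof (rule Bochner_Integration.integrable_bound[OF wint])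
      show "(\<lambda>x. cmod (y x) powr q) \<in> borel_measurable M" by measurable
      show "AE x in M. norm (cmod (y x) powr q) \<le> norm (w x)"
      proof (intro AE_I2)
        fix x
        have "cmod (y x) powr q \<le> w x powr q" by (rule powr_mono2) (use q nyw in auto)
        also have "\<dots> \<le> w x powr 1" by (rule powr_mono') (use q w0' in auto)
        also have "\<dots> = w x" using w0'[of x] by simp
        finally show "norm (cmod (y x) powr q) \<le> norm (w x)" using w0'[of x] by simp
      qed
    qed
  qed
  define r where "r z = (cmod (h z))^2 / (1 + cmod (h z))^2 * w z" for z
  have hy: "h z * y z = complex_of_real (r z)" for z
  proof -
    have "h z * y z = (h z * cnj (h z)) / (1 + complex_of_real (cmod (h z)))^2 * complex_of_real (w z)"
      unfolding y_def by simp
    also have "\<dots> = complex_of_real (r z)"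
      unfolding r_def complex_norm_square[symmetric] by simp
    finally show ?thesis .
  qed
  have rm[measurable]: "r \<in> borel_measurable M" unfolding r_def[abs_def] using hm by measurable
  have rnn: "0 \<le> r z" for z unfolding r_def using w0'[of z] by simp
  have rle: "r z \<le> w z" for z
  proof -
    have "(cmod (h z))^2 \<le> (1 + cmod (h z))^2" by (intro power_mono) auto
    then have hh: "(cmod (h z))^2 / (1 + cmod (h z))^2 \<le> 1" by (simp add: divide_le_eq)
    show ?thesis unfolding r_def using mult_right_mono[OF hh w0'(1)[of z]] by linarith
  qed
  have rint: "integrable M r"
    by (rule Bochner_Integration.integrable_bound[OF wint rm]) (use rnn rle w0' in auto)
  have "(\<integral>z. h z * y z \<partial>M) = 0" using orth yLp unfolding q_def by blast
  then have "complex_of_real (\<integral>z. r z \<partial>M) = 0" unfolding hy by simp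
  then have "(\<integral>z. r z \<partial>M) = 0" by simp
  then have "AE z in M. r z = 0" using integral_nonneg_eq_0_iff_AE[OF rint] rnn by simp
  moreover have "AE z in M. z \<in> space M" by (rule AE_space)
  ultimately show ?thesis
  proof eventually_elim
    case (elim z)
    then have "(cmod (h z))^2 / (1 + cmod (h z))^2 = 0" using wpos[of z] unfolding r_def by simp
    then have "h z = 0 \<or> 1 + cmod (h z) = 0" by simp
    moreover have "1 + cmod (h z) \<noteq> 0" by (smt (verit) norm_ge_zero)
    ultimately show "h z = 0" by blast
  qed
qed

lemma finite_Fn: "finite {s::'g::countable. to_nat s < n}"
proof -
  have "{s::'g. to_nat s < n} = to_nat -` {..<n}" by auto
  then show ?thesis using finite_vimageI[OF finite_lessThan[of n] inj_to_nat] by simp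
qed

lemma trunc_conv:
  assumes X: "\<Xi> \<in> Lp (count_space (UNIV::'g::countable set) \<Otimes>\<^sub>M M) p" and p: "0 < p"
  shows "(\<lambda>n. lpnorm (count_space (UNIV::'g set) \<Otimes>\<^sub>M M) p (\<lambda>w. \<Xi> w - tr {s. to_nat s < n} \<Xi> w)) \<longlonglongrightarrow> 0"
proof -
  let ?B = "count_space (UNIV::'g set) \<Otimes>\<^sub>M M"
  have Xm[measurable]: "\<Xi> \<in> borel_measurable ?B" using X unfolding Lp_def by simp
  have iX: "integrable ?B (\<lambda>w. norm (\<Xi> w) powr p)" using X unfolding Lp_def by simp
  define s where "s n w = norm (\<Xi> w - tr {s. to_nat s < n} \<Xi> w) powr p" for n w
  have se: "s n w = (if to_nat (fst w) < n then 0 else norm (\<Xi> w) powr p)" for n w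
    unfolding s_def tr_def by simp
  have [measurable]: "Measurable.pred ?B (\<lambda>w. to_nat (fst w) < n)" for n
    by (rule measurable_compose[OF measurable_fst]) simp
  have sm: "s n \<in> borel_measurable ?B" for n
    unfolding se[abs_def] by measurable
  have "(\<lambda>n. integral\<^sup>L ?B (s n)) \<longlonglongrightarrow> integral\<^sup>L ?B (\<lambda>w. 0::real)"
  proof (rule integral_dominated_convergence[OF _ sm iX])
    show "(\<lambda>w. 0::real) \<in> borel_measurable ?B" by simp
    show "AE w in ?B. (\<lambda>n. s n w) \<longlonglongrightarrow> 0"
    proof (intro AE_I2)
      fix w :: "'g \<times> _"
      have "eventually (\<lambda>n. s n w = 0) sequentially"
        unfolding se eventually_sequentially by (intro exI[of _ "Suc (to_nat (fst w))"]) auto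
      then show "(\<lambda>n. s n w) \<longlonglongrightarrow> 0" by (rule tendsto_eventually)
    qed
    show "AE w in ?B. norm (s n w) \<le> norm (\<Xi> w) powr p" for n
      by (intro AE_I2) (simp add: se)
  qed
  then have lim: "(\<lambda>n. integral\<^sup>L ?B (s n)) \<longlonglongrightarrow> 0" by simp
  have "(\<lambda>n. (integral\<^sup>L ?B (s n)) powr (1 / p)) \<longlonglongrightarrow> 0"
    by (rule tendsto_zero_powrI[OF lim tendsto_const]) (use p in \<open>auto simp: s_def\<close>)
  then show ?thesis unfolding lpnorm_def s_def by simp
qed

lemma f_tr_zero:
  assumes T: "T \<in> bounded_ops (count_space (UNIV::'g set) \<Otimes>\<^sub>M M) p"
    and X: "\<Xi> \<in> Lp (count_space (UNIV::'g set) \<Otimes>\<^sub>M M) p"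
    and F: "finite F"
    and z: "\<And>r. AE w in count_space (UNIV::'g set) \<Otimes>\<^sub>M M. T (tr {r} \<Xi>) w = 0"
  shows "AE w in count_space (UNIV::'g set) \<Otimes>\<^sub>M M. T (tr F \<Xi>) w = 0"
  using F
proof (induction F rule: finite_induct)
  case empty
  have "tr {} \<Xi> = (\<lambda>_. 0)" unfolding tr_def by auto
  then show ?case using bops_zero[OF T] by simp
next
  case (insert r F)
  have e: "tr (insert r F) \<Xi> = (\<lambda>y. tr F \<Xi> y + 1 * tr {r} \<Xi> y)"
    using insert(2) unfolding tr_def by (auto simp: fun_eq_iff)
  have "AE w in count_space (UNIV::'g set) \<Otimes>\<^sub>M M. T (\<lambda>y. tr F \<Xi> y + 1 * tr {r} \<Xi> y) w = T (tr F \<Xi>) w + 1 * T (tr {r} \<Xi>) w"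
    by (rule bops_lin[OF T Lp_tr[OF X] Lp_tr[OF X]])
  with insert(3) z[of r] show ?case unfolding e by eventually_elim simp
qed



lemma single_nuclear:
  assumes x: "x \<in> Lp N p" and y: "y \<in> Lp N (conj_exp p)"
  shows "(\<lambda>T. \<integral>z. T x z * y z \<partial>N) \<in> nuclear_functionals N p"
proof -
  define xs where "xs n = (if n = 0 then x else (\<lambda>_. 0))" for n :: nat
  define ys where "ys n = (if n = 0 then y else (\<lambda>_. 0))" for n :: nat
  have mem: "\<forall>n. xs n \<in> Lp N p \<and> ys n \<in> Lp N (conj_exp p)"
    unfolding xs_def ys_def using x y Lp_zero by auto
  have "(\<lambda>n. lpnorm N p (xs n) * lpnorm N (conj_exp p) (ys n))
      = (\<lambda>n. if n = 0 then lpnorm N p x * lpnorm N (conj_exp p) y else 0)"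
    unfolding xs_def ys_def by (auto simp: lpnorm_zero)
  then have sm: "summable (\<lambda>n. lpnorm N p (xs n) * lpnorm N (conj_exp p) (ys n))"
    using sums_single[of 0 "\<lambda>_. lpnorm N p x * lpnorm N (conj_exp p) y"] sums_summable by auto
  have eq: "(\<lambda>T. \<integral>z. T x z * y z \<partial>N) = (\<lambda>T. \<Sum>n. (\<integral>z. T (xs n) z * ys n z \<partial>N))"
  proof
    fix T :: "'a op"
    have "(\<lambda>n. (\<integral>z. T (xs n) z * ys n z \<partial>N)) = (\<lambda>n. if n = 0 then (\<integral>z. T x z * y z \<partial>N) else 0)"
      unfolding xs_def ys_def by auto
    then show "(\<integral>z. T x z * y z \<partial>N) = (\<Sum>n. (\<integral>z. T (xs n) z * ys n z \<partial>N))"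
      using sums_unique[OF sums_single[of 0 "\<lambda>_. (\<integral>z. T x z * y z \<partial>N)"]] by simp
  qed
  show ?thesis unfolding nuclear_functionals_def eq using mem sm by blast
qed

lemma grp_eq: "(-s + t = r) \<longleftrightarrow> (s = t - (r::'g::group_add))"
proof
  assume h: "-s + t = r"
  have "s + r = t" using h add_minus_cancel[of s t] by simp
  then show "s = t - r" by (metis add_diff_cancel)
next
  assume "s = t - r"
  then show "-s + t = r" by (simp add: minus_diff_eq)
qed

lemma ws_top: "topspace (weak_star N p) \<subseteq> bounded_ops N p"
  unfolding weak_star_def by simp

lemma W_bops: "W_star_p M p A \<alpha> \<subseteq> bounded_ops (big_measure M) p"
  unfolding W_star_p_def by (rule order_trans[OF closure_of_subset_topspace ws_top])

lemma tr_compl: "(\<lambda>w. \<Xi> w - tr F \<Xi> w) = tr (- F) \<Xi>"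
  unfolding tr_def by auto

lemma tr_single: "dl r (\<lambda>z. \<Xi> (r, z)) = tr {r} \<Xi>"
  unfolding tr_def dl_def by (auto simp: fun_eq_iff)

theorem mainTheorem8:
  fixes M :: "'x measure" and p :: real
    and A :: "'x op set"
    and \<alpha> :: "'g::{countable, group_add} \<Rightarrow> 'x op \<Rightarrow> 'x op"
    and E :: "'g \<Rightarrow> ('g \<times> 'x) op \<Rightarrow> 'x op"
    and f :: "('g \<times> 'x) op"
  assumes p: "1 < p"
    and sf: "sigma_finite_measure M"
    and sep: "separable_Lp M p"
    and subalg: "is_subalgebra M p A"
    and closed: "closedin (weak_star M p) A"
    and act: "weak_star_cont_isometric_action M p A \<alpha>"
    and E_maps: "\<And>t. \<forall>g\<in>W_star_p M p A \<alpha>. E t g \<in> A"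
    and E_lin: "\<And>t. \<forall>g\<in>W_star_p M p A \<alpha>. \<forall>h\<in>W_star_p M p A \<alpha>. \<forall>c.
                  op_eq M p (E t (op_add g (op_smult c h))) (op_add (E t g) (op_smult c (E t h)))"
    and E_contr: "\<And>t. \<forall>g\<in>W_star_p M p A \<alpha>.
                  op_norm M p (E t g) \<le> op_norm (big_measure M) p g"
    and E_cont: "\<And>t. continuous_map (subtopology (weak_star (big_measure M) p) (W_star_p M p A \<alpha>))
                                      (subtopology (weak_star M p) A) (E t)"
    and E_fin: "\<And>t F a. finite F \<Longrightarrow> (\<forall>s\<in>F. a s \<in> A) \<Longrightarrow>
                  op_eq M p (E t (finite_sum_op \<alpha> F a)) (if t \<in> F then a t else op_zero)"
    and f_in: "f \<in> W_star_p M p A \<alpha>"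
    and f_E: "\<And>t. op_eq M p (E t f) op_zero"
  shows "op_eq (big_measure M) p f op_zero"
proof -
  have p0: "0 < p" using p by simp
  have Asub: "A \<subseteq> bounded_ops M p" using subalg unfolding is_subalgebra_def by blast
  have zA: "op_zero \<in> A" using subalg unfolding is_subalgebra_def by blast
  have mapsA: "\<And>g a. a \<in> A \<Longrightarrow> \<alpha> g a \<in> A" using act unfolding weak_star_cont_isometric_action_def by blast
  have acont: "\<And>g. continuous_map (subtopology (weak_star M p) A) (subtopology (weak_star M p) A) (\<alpha> g)"
    using act unfolding weak_star_cont_isometric_action_def by blast
  have fB: "f \<in> bounded_ops (big_measure M) p" using f_in W_bops by blast
  have aresp: "\<And>g b b'. b \<in> A \<Longrightarrow> b' \<in> A \<Longrightarrow> op_eq M p b b' \<Longrightarrow> op_eq M p (\<alpha> g b) (\<alpha> g b')"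
    by (rule alpha_resp[OF p0 subalg act])
  have azero: "\<And>g. op_eq M p (\<alpha> g op_zero) op_zero" by (rule alpha_zero[OF subalg act])
  have K: "(\<integral>z. f (dl r x) (t, z) * y z \<partial>M) = 0"
    if x: "x \<in> Lp M p" and y: "y \<in> Lp M (conj_exp p)" for r t :: 'g and x y
  proof -
    define s0 where "s0 = t - r"
    define \<psi> where "\<psi> T = (\<integral>w. T (dl r x) w * dl t y w \<partial>big_measure M)" for T :: "('g \<times> 'x) op"
    define chi where "chi b = (\<integral>z. b x z * y z \<partial>M)" for b :: "'x op"
    have dx: "dl r x \<in> Lp (big_measure M) p" by (rule Lp_dl[OF sf x])
    have dy: "dl t y \<in> Lp (big_measure M) (conj_exp p)" by (rule Lp_dl[OF sf y])
    have ym: "y \<in> borel_measurable M" using y by (rule Lp_meas)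
    have \<psi>': "\<psi> T = (\<integral>z. T (dl r x) (t, z) * y z \<partial>M)" if T: "T \<in> bounded_ops (big_measure M) p" for T
    proof -
      have Tm: "T (dl r x) \<in> borel_measurable (big_measure M)" by (rule Lp_meas[OF bops_Lp[OF T dx]])
      have km: "(\<lambda>z. T (dl r x) (t, z) * y z) \<in> borel_measurable M"
        using section_meas[OF Tm, of t] ym by measurable
      have "\<psi> T = (\<integral>w. (if fst w = t then T (dl r x) (t, snd w) * y (snd w) else 0) \<partial>big_measure M)"
        unfolding \<psi>_def by (intro Bochner_Integration.integral_cong refl) (auto simp: dl_def)
      also have "\<dots> = (\<integral>z. T (dl r x) (t, z) * y z \<partial>M)"
        by (rule sec_integral[OF sf km])
      finally show ?thesis .
    qed
    have c1: "continuous_map (subtopology (weak_star (big_measure M) p) (W_star_p M p A \<alpha>)) euclidean \<psi>"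
      unfolding \<psi>_def
      by (intro continuous_map_from_subtopology nuclear_cont single_nuclear dx dy)
    have cchi: "continuous_map (subtopology (weak_star M p) A) euclidean chi"
      unfolding chi_def by (intro continuous_map_from_subtopology nuclear_cont single_nuclear x y)
    have c2: "continuous_map (subtopology (weak_star (big_measure M) p) (W_star_p M p A \<alpha>)) euclidean
                (chi \<circ> \<alpha> (-t) \<circ> E s0)"
      by (intro continuous_map_compose[OF E_cont] continuous_map_compose[OF acont] cchi)
    have chi_cong: "chi b = chi b'" if b: "b \<in> A" and b': "b' \<in> A" and e: "op_eq M p b b'" for b b'
    proof -
      have "AE z in M. b x z = b' x z" using e x unfolding op_eq_def by blast
      then have "AE z in M. b x z * y z = b' x z * y z" by eventually_elim simp
      moreover have "(\<lambda>z. b x z * y z) \<in> borel_measurable M"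
        using Lp_meas[OF bops_Lp[OF subsetD[OF Asub b] x]] ym by measurable
      moreover have "(\<lambda>z. b' x z * y z) \<in> borel_measurable M"
        using Lp_meas[OF bops_Lp[OF subsetD[OF Asub b'] x]] ym by measurable
      ultimately show ?thesis unfolding chi_def by (intro integral_cong_AE) auto
    qed
    have chi0: "chi (\<alpha> (-t) op_zero) = 0"
    proof -
      have "AE z in M. \<alpha> (-t) op_zero x z = 0" using azero[of "-t"] x unfolding op_eq_def op_zero_def by blast
      then have "AE z in M. \<alpha> (-t) op_zero x z * y z = 0" by eventually_elim simp
      moreover have "(\<lambda>z. \<alpha> (-t) op_zero x z * y z) \<in> borel_measurable M"
        using Lp_meas[OF bops_Lp[OF subsetD[OF Asub mapsA[OF zA]] x]] ym by measurable
      ultimately have "chi (\<alpha> (-t) op_zero) = (\<integral>z. 0 \<partial>M)" unfolding chi_def by (intro integral_cong_AE) auto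
      then show ?thesis by simp
    qed
    have agree: "\<psi> g = (chi \<circ> \<alpha> (-t) \<circ> E s0) g"
      if gS: "g \<in> finite_sums \<alpha> A" and gT: "g \<in> topspace (weak_star (big_measure M) p)" for g
    proof -
      obtain F a where F: "finite F" and aA: "\<forall>s\<in>F. a s \<in> A" and g: "g = finite_sum_op \<alpha> F a"
        using gS unfolding finite_sums_def by blast
      have gB: "g \<in> bounded_ops (big_measure M) p" by (rule subsetD[OF ws_top gT])
      have gW: "g \<in> W_star_p M p A \<alpha>" unfolding W_star_p_def
        by (rule subsetD[OF closure_of_subset_Int IntI[OF gT gS]])
      have EA: "E s0 g \<in> A" by (rule bspec[OF E_maps gW])
      have ifA: "(if s0 \<in> F then a s0 else op_zero) \<in> A" using aA zA by auto
      have chiE: "chi (\<alpha> (-t) (E s0 g)) = chi (\<alpha> (-t) (if s0 \<in> F then a s0 else op_zero))"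
        by (rule chi_cong[OF mapsA[OF EA] mapsA[OF ifA] aresp[OF EA ifA E_fin[OF F aA, of s0, folded g]]])
      have gx: "g (dl r x) (t, z) = (\<Sum>s\<in>F. \<alpha> (-t) (a s) (if -s + t = r then x else (\<lambda>_. 0)) z)" for z
        unfolding g finite_sum_op_def pi_rep_def lambda_rep_def dl_def
        by (intro sum.cong refl) (auto intro!: arg_cong[where f="\<lambda>u. \<alpha> (-t) _ u z"])
      have "AE z in M. \<forall>s\<in>F. \<alpha> (-t) (a s) (\<lambda>_. 0) z = 0"
      proof (rule AE_finite_allI[OF F])
        fix s assume "s \<in> F"
        then have "a s \<in> A" using aA by blast
        show "AE z in M. \<alpha> (-t) (a s) (\<lambda>_. 0) z = 0"
          by (rule bops_zero[OF subsetD[OF Asub mapsA[OF \<open>a s \<in> A\<close>]]])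
      qed
      then have ae: "AE z in M. g (dl r x) (t, z) * y z = (if s0 \<in> F then \<alpha> (-t) (a s0) x z else 0) * y z"
      proof eventually_elim
        case (elim z)
        have "g (dl r x) (t, z) = (\<Sum>s\<in>F. if s = s0 then \<alpha> (-t) (a s) x z else 0)"
          unfolding gx s0_def by (intro sum.cong refl) (use elim in \<open>auto simp: grp_eq\<close>)
        also have "\<dots> = (if s0 \<in> F then \<alpha> (-t) (a s0) x z else 0)" using F by simp
        finally show ?case by simp
      qed
      have "\<psi> g = (\<integral>z. g (dl r x) (t, z) * y z \<partial>M)" by (rule \<psi>'[OF gB])
      also have "\<dots> = (\<integral>z. (if s0 \<in> F then \<alpha> (-t) (a s0) x z else 0) * y z \<partial>M)"
      proof (rule integral_cong_AE[OF _ _ ae])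
        have Tm: "g (dl r x) \<in> borel_measurable (big_measure M)" by (rule Lp_meas[OF bops_Lp[OF gB dx]])
        show "(\<lambda>z. g (dl r x) (t, z) * y z) \<in> borel_measurable M"
          using section_meas[OF Tm, of t] ym by measurable
        show "(\<lambda>z. (if s0 \<in> F then \<alpha> (-t) (a s0) x z else 0) * y z) \<in> borel_measurable M"
        proof (cases "s0 \<in> F")
          case True
          then have "\<alpha> (-t) (a s0) x \<in> borel_measurable M"
            using Lp_meas[OF bops_Lp[OF subsetD[OF Asub mapsA] x]] aA by blast
          then show ?thesis using True ym by simp
        qed simp
      qed
      also have "\<dots> = chi (\<alpha> (-t) (if s0 \<in> F then a s0 else op_zero))"
      proof (cases "s0 \<in> F")
        case True then show ?thesis unfolding chi_def by simp
      next
        case False then show ?thesis using chi0 by simp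
      qed
      also have "\<dots> = (chi \<circ> \<alpha> (-t) \<circ> E s0) g" using chiE by simp
      finally show ?thesis .
    qed
    have "\<psi> f = (chi \<circ> \<alpha> (-t) \<circ> E s0) f"
      by (rule closure_agree[OF c1 c2 W_star_p_def agree f_in])
    also have "\<dots> = chi (\<alpha> (-t) op_zero)"
    proof -
      have EA: "E s0 f \<in> A" by (rule bspec[OF E_maps f_in])
      show ?thesis using chi_cong[OF mapsA[OF EA] mapsA[OF zA] aresp[OF EA zA f_E]] by simp
    qed
    also have "\<dots> = 0" by (rule chi0)
    finally show ?thesis using \<psi>'[OF fB] by simp
  qed
  have piece: "AE w in big_measure M. f (tr {r} \<Xi>) w = 0"
    if X: "\<Xi> \<in> Lp (big_measure M) p" for \<Xi> r
  proof -
    define x where "x = (\<lambda>z. \<Xi> (r, z))"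
    have x: "x \<in> Lp M p" unfolding x_def by (rule Lp_section[OF sf X])
    have dx: "dl r x \<in> Lp (big_measure M) p" by (rule Lp_dl[OF sf x])
    have Tm[measurable]: "f (dl r x) \<in> borel_measurable (big_measure M)" by (rule Lp_meas[OF bops_Lp[OF fB dx]])
    have "AE z in M. f (dl r x) (t, z) = 0" for t
      by (rule dual_zero[OF sf p section_meas[OF Tm]]) (rule K[OF x])
    then have "AE w in big_measure M. f (dl r x) w = 0"
      by (rule AE_big[OF sf measurable_equality_set[OF Tm borel_measurable_const]])
    then show ?thesis unfolding x_def tr_single .
  qed
  show ?thesis
    unfolding op_eq_def op_zero_def
  proof
    fix \<Xi> :: "'g \<times> 'x \<Rightarrow> complex" assume X: "\<Xi> \<in> Lp (big_measure M) p"
    obtain C where C: "\<forall>h\<in>Lp (big_measure M) p. lpnorm (big_measure M) p (f h) \<le> C * lpnorm (big_measure M) p h"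
      using bops_bound[OF fB] by blast
    define L where "L n = lpnorm (big_measure M) p (\<lambda>w. \<Xi> w - tr {s. to_nat s < n} \<Xi> w)" for n
    have Lt: "L \<longlonglongrightarrow> 0" unfolding L_def by (rule trunc_conv[OF X p0])
    have fX: "f \<Xi> \<in> Lp (big_measure M) p" by (rule bops_Lp[OF fB X])
    have bnd: "lpnorm (big_measure M) p (f \<Xi>) \<le> C * L n" for n
    proof -
      let ?F = "{s::'g. to_nat s < n}"
      have R: "tr (- ?F) \<Xi> \<in> Lp (big_measure M) p" by (rule Lp_tr[OF X])
      have e: "\<Xi> = (\<lambda>y. tr ?F \<Xi> y + 1 * tr (- ?F) \<Xi> y)" unfolding tr_def by (auto simp: fun_eq_iff)
      from e have fe: "f \<Xi> = f (\<lambda>y. tr ?F \<Xi> y + 1 * tr (- ?F) \<Xi> y)" by (rule arg_cong)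
      have "AE w in big_measure M. f (\<lambda>y. tr ?F \<Xi> y + 1 * tr (- ?F) \<Xi> y) w = f (tr ?F \<Xi>) w + 1 * f (tr (- ?F) \<Xi>) w"
        by (rule bops_lin[OF fB Lp_tr[OF X] R])
      moreover have "AE w in big_measure M. f (tr ?F \<Xi>) w = 0"
        by (rule f_tr_zero[OF fB X finite_Fn piece[OF X]])
      ultimately have "AE w in big_measure M. f \<Xi> w = f (tr (- ?F) \<Xi>) w"
        by eventually_elim (simp only: fe, simp)
      then have "lpnorm (big_measure M) p (f \<Xi>) = lpnorm (big_measure M) p (f (tr (- ?F) \<Xi>))"
        by (intro lpnorm_cong_AE Lp_meas[OF fX] Lp_meas[OF bops_Lp[OF fB R]])
      also have "\<dots> \<le> C * lpnorm (big_measure M) p (tr (- ?F) \<Xi>)" by (rule bspec[OF C R])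
      also have "\<dots> = C * L n" unfolding L_def tr_compl ..
      finally show ?thesis .
    qed
    have "(\<lambda>n. C * L n) \<longlonglongrightarrow> C * 0" by (intro tendsto_mult tendsto_const Lt)
    then have "lpnorm (big_measure M) p (f \<Xi>) \<le> C * 0"
      by (rule LIMSEQ_le_const) (use bnd in auto)
    then have "AE w in big_measure M. f \<Xi> w = 0" using lpnorm_zero_AE[OF fX p0] by simp
    then show "AE w in big_measure M. f \<Xi> w = 0" .
  qed
qed


end
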